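(* Let $\lambda$ be a nonzero real number. For any integer $p\ge1$, \[ \sum_{k=1}^{\infty}\frac{H_{k,\lambda}^{(p)}}{k(k+1)}=\zeta_{\lambda}(p+1), \] and \[ \sum_{k=1}^{\infty}\frac{H_{k,\lambda}^{(p)}}{k(k+2)}=\frac{1}{2}\bigg(\zeta_{\lambda}(p+1)+\sum_{k=2}^{p}(-1)^{k}\zeta_{\lambda}(p+2-k)+\frac{(-1)^{p+1}}{\lambda+1}\bigg), \] i.e. $\frac12\big(\zeta_{\lambda}(p+1)+\zeta_{\lambda}(p)-\zeta_{\lambda}(p-1)+\cdots+(-1)^{p}\zeta_{\lambda}(2)+\frac{(-1)^{p+1}}{\lambda+1}\big)$.
   Context: For real $x$ and $\mu\neq 0$, set $(x)_{0,\mu}=1$ and $(x)_{n,\mu}=x(x-\mu)\cdots(x-(n-1)\mu)$ for $n\ge1$. The degenerate zeta function is $\zeta_{\lambda}(s)=\sum_{n=1}^{\infty}\frac{(-1)^{n-1}\lambda^{n-1}(1)_{n,1/\lambda}}{(n-1)!\,n^{s}}$ for $\mathrm{Re}(s)>1$. The degenerate higher-order harmonic numbers are $H_{0,\lambda}^{(k)}=0$ and $H_{n,\lambda}^{(k)}=\sum_{l=1}^{n}\frac{(-\lambda)^{l-1}(1)_{l,1/\lambda}}{l^{k}(l-1)!}$ for $n\ge1$. *)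

theory Defs
  imports Complex_Main
begin

definition gen_fall :: "real \<Rightarrow> real \<Rightarrow> nat \<Rightarrow> real" where
  "gen_fall x \<mu> n = (\<Prod>j<n. (x - real j * \<mu>))"

definition dcoef :: "real \<Rightarrow> nat \<Rightarrow> real" where
  "dcoef lam n = (-1) ^ (n - 1) * lam ^ (n - 1) * gen_fall 1 (1 / lam) n / fact (n - 1)"

definition dzeta_term :: "real \<Rightarrow> real \<Rightarrow> nat \<Rightarrow> real" where
  "dzeta_term lam s n = dcoef lam (n + 1) / (real (n + 1)) powr s"

definition dzeta :: "real \<Rightarrow> real \<Rightarrow> real" where
  "dzeta lam s = (\<Sum>n. dzeta_term lam s n)"

definition dharm :: "real \<Rightarrow> nat \<Rightarrow> nat \<Rightarrow> real" where
  "dharm lam k n = (\<Sum>l = 1..n. (-lam) ^ (l - 1) * gen_fall 1 (1 / lam) l / (real l ^ k * fact (l - 1)))"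

end

theory Submission imports Defs "HOL-Analysis.Analysis" "HOL-Real_Asymp.Real_Asymp" begin

lemma gen_fall_Suc: "gen_fall x m (Suc n) = gen_fall x m n * (x - real n * m)"
  by (simp add: gen_fall_def)

lemma dcoef_1: "dcoef lam 1 = 1"
  by (simp add: dcoef_def gen_fall_def)

lemma dcoef_Suc:
  assumes "lam \<noteq> 0" "l \<ge> 1"
  shows "dcoef lam (Suc l) = dcoef lam l * (real l - lam) / real l"
proof -
  obtain m where l: "l = Suc m" using assms(2) by (cases l) auto
  have "dcoef lam (Suc l) = (-1) ^ l * lam ^ l * (gen_fall 1 (1/lam) l * (1 - real l / lam)) / fact l"
    by (simp add: dcoef_def gen_fall_Suc)
  also have "\<dots> = ((-1) ^ m * lam ^ m * gen_fall 1 (1/lam) l / fact m) * (real l - lam) / real l"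
  proof -
    have F: "fact m > (0::real)" by simp
    have e: "fact l = real l * fact m" "(-1::real) ^ l = - ((-1) ^ m)" "lam ^ l = lam * lam ^ m"
      by (simp_all add: l)
    have L: "real l > 0" using assms(2) by simp
    have "(-1) ^ l * lam ^ l * (G * (1 - real l / lam)) / fact l = ((-1) ^ m * lam ^ m * G / fact m) * (real l - lam) / real l" for G :: real
      unfolding e using assms(1) F L
      by (simp add: field_simps)
    then show ?thesis .
  qed
  also have "\<dots> = dcoef lam l * (real l - lam) / real l"
    by (simp add: dcoef_def l)
  finally show ?thesis .
qed

lemma dharm_0: "dharm lam k 0 = 0" by (simp add: dharm_def)

lemma term_eq: "(-lam) ^ j * G / (R * F) = ((-1) ^ j * lam ^ j * G / F) / (R::real)"
proof -
  have "(-lam)^j = (-1)^j*lam^j" by (metis mult_minus1 power_mult_distrib)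
  then show ?thesis by (simp only: divide_divide_eq_left mult.commute[of R F])
qed

lemma dharm_Suc: "dharm lam k (Suc n) = dharm lam k n + dcoef lam (Suc n) / real (Suc n) ^ k"
proof -
  have "dharm lam k (Suc n) = dharm lam k n + (-lam) ^ (Suc n - 1) * gen_fall 1 (1 / lam) (Suc n) / (real (Suc n) ^ k * fact (Suc n - 1))"
    unfolding dharm_def by (rule sum.cl_ivl_Suc[THEN trans]) simp
  also have "\<dots> = dharm lam k n + dcoef lam (Suc n) / real (Suc n) ^ k"
    unfolding term_eq dcoef_def ..
  finally show ?thesis .
qed

lemma dharm_eq: "dharm lam k n = (\<Sum>i<n. dcoef lam (Suc i) / real (Suc i) ^ k)"
  by (induction n) (simp_all add: dharm_0 dharm_Suc)

lemma dzeta_term_nat: "dzeta_term lam (real m) n = dcoef lam (Suc n) / real (Suc n) ^ m"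
  by (simp add: dzeta_term_def powr_realpow)

lemma PF:
  fixes x :: real assumes "x > 0" "p \<ge> 1"
  shows "1 / (x ^ p * (x + 1)) = (\<Sum>j=2..p. (-1) ^ j / x ^ (p + 2 - j)) + (-1) ^ (p + 1) / (x * (x + 1))"
  using assms(2)
proof (induction p rule: dec_induct)
  case base
  then show ?case by simp
next
  case (step p)
  have g: "1 / (x ^ Suc p * (x + 1)) = 1 / x ^ Suc p - 1 / (x ^ p * (x + 1))"
  proof -
    have a: "x ^ p > 0" "x + 1 > 0" using assms(1) by auto
    have k: "1/(x*y*(x+1)) = 1/(x*y) - 1/(y*(x+1))" if "y > 0" for y
    proof -
      have "1/(x*y) - 1/(y*z) = (z - x)/(x*y*z)" if "z > 0" for z
        using that \<open>y > 0\<close> assms(1) by (simp add: field_simps)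
      from this[of "x+1"] show ?thesis using assms(1) by simp
    qed
    show ?thesis using k[OF a(1)] by (simp add: mult_ac)
  qed
  have "(\<Sum>j=2..Suc p. (-1) ^ j / x ^ (Suc p + 2 - j)) = 1 / x ^ Suc p + (\<Sum>j=Suc 2..Suc p. (-1) ^ j / x ^ (Suc p + 2 - j))"
    using step(1) by (subst sum.atLeast_Suc_atMost) auto
  also have "(\<Sum>j=Suc 2..Suc p. (-1) ^ j / x ^ (Suc p + 2 - j)) = (\<Sum>j=2..p. (-1) ^ Suc j / x ^ (Suc p + 2 - Suc j))"
    by (rule sum.shift_bounds_cl_Suc_ivl)
  also have "\<dots> = - (\<Sum>j=2..p. (-1) ^ j / x ^ (p + 2 - j))"
    by (simp add: sum_negf[symmetric])
  finally show ?case using g step(3) by simp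
qed

lemma harm_not: "\<not> summable (\<lambda>n. 1 / real (Suc n))"
proof
  assume "summable (\<lambda>n. 1 / real (Suc n))"
  then have "summable (\<lambda>n. inverse (real (Suc n)))" by (simp add: divide_inverse)
  then have "summable (\<lambda>n. inverse (real n))" by (subst summable_Suc_iff[symmetric])
  then show False using not_summable_harmonic by blast
qed

lemma dcoef_sign:
  assumes "lam \<noteq> 0"
  shows "\<exists>N \<sigma>. (\<sigma> = 1 \<or> \<sigma> = -1) \<and> (\<forall>n\<ge>N. \<bar>dcoef lam (Suc n)\<bar> = \<sigma> * dcoef lam (Suc n))"
proof -
  define N where "N = nat \<lceil>lam\<rceil>"
  have N: "real N \<ge> lam" unfolding N_def by linarith
  define \<sigma> :: real where "\<sigma> = (if dcoef lam (Suc N) \<ge> 0 then 1 else -1)"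
  have "\<bar>dcoef lam (Suc n)\<bar> = \<sigma> * dcoef lam (Suc n)" if "n \<ge> N" for n
    using that
  proof (induction n rule: dec_induct)
    case base
    then show ?case unfolding \<sigma>_def by auto
  next
    case (step n)
    have f: "(real (Suc n) - lam) / real (Suc n) \<ge> 0"
      using N step(1) by (intro divide_nonneg_pos) auto
    have e: "dcoef lam (Suc (Suc n)) = dcoef lam (Suc n) * ((real (Suc n) - lam) / real (Suc n))"
      using dcoef_Suc[OF assms, of "Suc n"] by simp
    have g: "real (Suc n) - lam \<ge> 0" using N step(1) by simp
    show ?case unfolding e abs_mult using f g step(3) by simp
  qed
  moreover have "\<sigma> = 1 \<or> \<sigma> = -1" unfolding \<sigma>_def by auto
  ultimately show ?thesis by blast
qed

lemma abs_summ:
  assumes "lam \<noteq> 0" "summable (\<lambda>n. dcoef lam (Suc n) / real (Suc n) ^ m)"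
  shows "summable (\<lambda>n. \<bar>dcoef lam (Suc n) / real (Suc n) ^ m\<bar>)"
proof -
  obtain N \<sigma> where s: "\<sigma> = 1 \<or> \<sigma> = -1" "\<forall>n\<ge>N. \<bar>dcoef lam (Suc n)\<bar> = \<sigma> * dcoef lam (Suc n)"
    using dcoef_sign[OF assms(1)] by blast
  have "eventually (\<lambda>n. \<bar>dcoef lam (Suc n) / real (Suc n) ^ m\<bar> = \<sigma> * (dcoef lam (Suc n) / real (Suc n) ^ m)) sequentially"
    using s(2) unfolding eventually_sequentially by (auto simp: abs_divide)
  then have "summable (\<lambda>n. \<bar>dcoef lam (Suc n) / real (Suc n) ^ m\<bar>) = summable (\<lambda>n. \<sigma> * (dcoef lam (Suc n) / real (Suc n) ^ m))"
    by (rule summable_cong)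
  then show ?thesis using summable_mult[OF assms(2)] by simp
qed

lemma kron:
  fixes b :: "nat \<Rightarrow> real"
  assumes "summable (\<lambda>n. \<bar>b n\<bar>)" "d \<ge> 1"
  shows "(\<lambda>N. (\<Sum>n<N. b n * real (Suc n)) / (real N + d)) \<longlonglongrightarrow> 0"
proof -
  define a where "a k N = (if k < N then b k * real (Suc k) / (real N + d) else 0)" for k N
  have lim: "(\<lambda>N. a k N) \<longlonglongrightarrow> 0" for k
  proof -
    have "eventually (\<lambda>N. b k * real (Suc k) / (real N + d) = a k N) sequentially"
      unfolding a_def eventually_sequentially by (intro exI[of _ "Suc k"]) auto
    moreover have "(\<lambda>N. b k * real (Suc k) / (real N + d)) \<longlonglongrightarrow> 0"
      by real_asymp
    ultimately show ?thesis by (rule Lim_transform_eventually[rotated])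
  qed
  have bnd: "norm (a k N) \<le> \<bar>b k\<bar>" for k N
  proof (cases "k < N")
    case True
    have q: "real (Suc k) / (real N + d) \<le> 1" using True assms(2) by (simp add: field_simps)
    have "norm (a k N) = \<bar>b k\<bar> * (real (Suc k) / (real N + d))"
      using True assms(2) by (simp add: a_def abs_mult abs_divide)
    also have "\<dots> \<le> \<bar>b k\<bar>" using mult_left_mono[OF q abs_ge_zero[of "b k"]] by simp
    finally show ?thesis .
  qed (simp add: a_def)
  have T: "(\<lambda>N. suminf (\<lambda>k. a k N)) \<longlonglongrightarrow> suminf (\<lambda>k. 0::real)"
    using tannerys_theorem[of a "\<lambda>_. 0" sequentially "\<lambda>k. \<bar>b k\<bar>", OF lim _ assms(1)] bnd
    by (simp add: always_eventually)
  have "suminf (\<lambda>k. a k N) = (\<Sum>n<N. b n * real (Suc n)) / (real N + d)" for N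
    by (subst suminf_finite[of "{..<N}"]) (auto simp: a_def sum_divide_distrib)
  then show ?thesis using T by simp
qed

lemma tele:
  assumes lam: "lam \<noteq> 0" and S: "summable (\<lambda>n. dcoef lam (Suc n) / real (Suc n) ^ 2)"
  shows "lam \<noteq> -1 \<and> (\<lambda>n. dcoef lam (Suc n) / (real (Suc n) * real (Suc (Suc n)))) sums (1 / (lam + 1))"
proof -
  define c where "c n = dcoef lam (Suc n) / real (Suc n)" for n
  define d where "d n = dcoef lam (Suc n) / (real (Suc n) * real (Suc (Suc n)))" for n
  have rec: "c (Suc n) = c n * (real (Suc n) - lam) / real (Suc (Suc n))" for n
  proof -
    have "dcoef lam (Suc (Suc n)) = dcoef lam (Suc n) * (real (Suc n) - lam) / real (Suc n)"
      by (rule dcoef_Suc[OF lam]) simp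
    moreover have "A * B / C / D = B * (A / C) / D" for A B C D :: real by simp
    ultimately show ?thesis unfolding c_def by simp
  qed
  have diff: "c n - c (Suc n) = (1 + lam) * d n" for n
  proof -
    have g: "A/m - A/m*(m-lam)/m' = (A/(m*m'))*(m' - m + lam)" if "m > 0" "m' > 0" for A m m' :: real
      using that by (simp add: field_simps)
    have "c n - c (Suc n) = (dcoef lam (Suc n) / (real (Suc n) * real (Suc (Suc n)))) * (real (Suc (Suc n)) - real (Suc n) + lam)"
      unfolding rec unfolding c_def by (rule g) auto
    then show ?thesis unfolding d_def by simp
  qed
  have AS: "summable (\<lambda>n. \<bar>dcoef lam (Suc n) / real (Suc n) ^ 2\<bar>)"
    by (rule abs_summ[OF lam S])
  have c0: "c 0 = 1" using dcoef_1[of lam] by (simp add: c_def)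
  have sd: "summable d"
  proof (rule summable_comparison_test[OF _ AS])
    show "\<exists>N. \<forall>n\<ge>N. norm (d n) \<le> \<bar>dcoef lam (Suc n) / real (Suc n) ^ 2\<bar>"
    proof (intro exI allI impI)
      fix n :: nat
      have "real (Suc n) ^ 2 \<le> real (Suc n) * real (Suc (Suc n))" by (simp add: power2_eq_square)
      then show "norm (d n) \<le> \<bar>dcoef lam (Suc n) / real (Suc n) ^ 2\<bar>"
        unfolding d_def real_norm_def abs_divide abs_mult
        by (intro divide_left_mono) auto
    qed
  qed
  have nm1: "lam \<noteq> -1"
  proof
    assume m: "lam = -1"
    have "c n = 1" for n
      by (induction n) (simp_all add: c0 rec m)
    then have "dcoef lam (Suc n) / real (Suc n) ^ 2 = 1 / real (Suc n)" for n
      unfolding c_def by (simp add: power2_eq_square field_simps)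
    then show False using S harm_not by simp
  qed
  have sdiff: "summable (\<lambda>n. c n - c (Suc n))"
    unfolding diff by (rule summable_mult[OF sd])
  then obtain s where s: "(\<lambda>n. c n - c (Suc n)) sums s" by (auto simp: summable_def)
  have "(\<lambda>N. c 0 - (\<Sum>n<N. c n - c (Suc n))) \<longlonglongrightarrow> c 0 - s"
    using s unfolding sums_def by (intro tendsto_intros)
  then have cL: "c \<longlonglongrightarrow> c 0 - s" by (simp add: sum_lessThan_telescope')
  have L0: "c 0 - s = 0"
  proof (rule ccontr)
    assume L: "c 0 - s \<noteq> 0"
    define e where "e = \<bar>c 0 - s\<bar> / 2"
    have e: "e > 0" using L by (simp add: e_def)
    have "(\<lambda>n. \<bar>c n\<bar>) \<longlonglongrightarrow> \<bar>c 0 - s\<bar>" by (intro tendsto_intros cL)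
    moreover have "e < \<bar>c 0 - s\<bar>" using L by (simp add: e_def)
    ultimately have ev: "eventually (\<lambda>n. e < \<bar>c n\<bar>) sequentially" by (rule order_tendstoD)
    have "summable (\<lambda>n. e * (1 / real (Suc n)))"
    proof (rule summable_comparison_test[OF _ AS])
      from ev obtain N where N: "\<forall>n\<ge>N. e < \<bar>c n\<bar>" unfolding eventually_sequentially by blast
      show "\<exists>N. \<forall>n\<ge>N. norm (e * (1 / real (Suc n))) \<le> \<bar>dcoef lam (Suc n) / real (Suc n) ^ 2\<bar>"
      proof (intro exI[of _ N] allI impI)
        fix n assume "n \<ge> N"
        then have "e \<le> \<bar>c n\<bar>" using N by auto
        then have "e / real (Suc n) \<le> \<bar>c n\<bar> / real (Suc n)" by (intro divide_right_mono) auto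
        also have "\<bar>c n\<bar> / real (Suc n) = \<bar>dcoef lam (Suc n) / real (Suc n) ^ 2\<bar>"
          unfolding c_def by (simp add: abs_divide power2_eq_square)
        finally show "norm (e * (1 / real (Suc n))) \<le> \<bar>dcoef lam (Suc n) / real (Suc n) ^ 2\<bar>"
          using e by simp
      qed
    qed
    then have "summable (\<lambda>n. (1/e) * (e * (1 / real (Suc n))))" by (rule summable_mult)
    then show False using e harm_not by simp
  qed
  have "(\<lambda>n. c n - c (Suc n)) sums (c 0 - 0)"
    by (rule telescope_sums') (use cL L0 in simp)
  then have "(\<lambda>n. (1 + lam) * d n) sums 1" unfolding diff c0 by simp
  then have "(\<lambda>n. (1 / (1 + lam)) * ((1 + lam) * d n)) sums (1 / (1 + lam) * 1)" by (rule sums_mult)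
  then have "d sums (1 / (lam + 1))" using nm1 by (simp add: add.commute)
  then show ?thesis using nm1 unfolding d_def by simp
qed

lemma G1:
  fixes H X m :: real assumes "m > 0"
  shows "(H + X) / (m * (m + 1)) = X / m - (H + X) / (m + 1) + H / m"
proof -
  have "(H + X) / (m * m') - (X / m - (H + X) / m' + H / m) = (H + X) * (1 + m - m') / (m * m')"
    if "m' > 0" for m' using that assms by (simp add: field_simps)
  from this[of "m + 1"] show ?thesis using assms by simp
qed

lemma G2:
  fixes H X m :: real assumes "m > 0"
  shows "(H + X) / (m * (m + 2)) = (1/2) * (X / m + X / (m + 1) - (H + X) / (m + 1) - (H + X) / (m + 2) + H / m + H / (m + 1))"
proof -
  have gen: "(1/2) * (X / m + X / m1 - (H + X) / m1 - (H + X) / m2 + H / m + H / m1) = (H + X) / (m * m2) * ((m2 - m) / 2)"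
    if "m1 > 0" "m2 > 0" for m1 m2 using that assms by (simp add: field_simps)
  have eq: "(1/2) * (X / m + X / (m + 1) - (H + X) / (m + 1) - (H + X) / (m + 2) + H / m + H / (m + 1)) = (H + X) / (m * (m + 2)) * (((m + 2) - m) / 2)"
    by (rule gen[of "m + 1" "m + 2"]) (use assms in auto)
  have h: "((m + 2) - m) / 2 = (1::real)" by simp
  show ?thesis using eq h by (metis mult_1_right)
qed

lemma P1:
  "(\<Sum>k<N. dharm lam p (k + 1) / (real (k + 1) * real (k + 2)))
     = (\<Sum>k<N. dcoef lam (Suc k) / real (Suc k) ^ (p + 1)) - dharm lam p N / (real N + 1)"
proof -
  define Q where "Q N = (\<Sum>k<N. dcoef lam (Suc k) / real (Suc k) ^ (p + 1)) - dharm lam p N / (real N + 1)" for N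
  have "dharm lam p (n + 1) / (real (n + 1) * real (n + 2)) = Q (Suc n) - Q n" for n
  proof -
    define m where "m = real (Suc n)"
    define X where "X = dcoef lam (Suc n) / m ^ p"
    have m: "m > 0" "real (n + 1) = m" "real (n + 2) = m + 1" "real (Suc n) + 1 = m + 1" "real n + 1 = m"
      by (simp_all add: m_def)
    have H: "dharm lam p (n + 1) = dharm lam p n + X" by (simp add: dharm_Suc X_def m_def)
    have B: "dcoef lam (Suc n) / real (Suc n) ^ (p + 1) = X / m" by (simp add: X_def m_def)
    have "Q (Suc n) - Q n = X / m - (dharm lam p n + X) / (m + 1) + dharm lam p n / m"
      unfolding Q_def using B H m by simp
    then show ?thesis unfolding H m(2,3) using G1[OF m(1)] by simp
  qed
  then have "(\<Sum>k<N. dharm lam p (k + 1) / (real (k + 1) * real (k + 2))) = (\<Sum>k<N. Q (Suc k) - Q k)"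
    by simp
  also have "\<dots> = Q N - Q 0" by (rule sum_lessThan_telescope)
  finally show ?thesis by (simp add: Q_def dharm_0)
qed

lemma P2:
  "(\<Sum>k<N. dharm lam p (k + 1) / (real (k + 1) * real (k + 3)))
     = (1/2) * ((\<Sum>k<N. dcoef lam (Suc k) / real (Suc k) ^ (p + 1))
          + (\<Sum>k<N. dcoef lam (Suc k) / real (Suc k) ^ p / real (Suc (Suc k)))
          - dharm lam p N / (real N + 1) - dharm lam p N / (real N + 2))"
proof -
  define Q where "Q N = (1/2) * ((\<Sum>k<N. dcoef lam (Suc k) / real (Suc k) ^ (p + 1))
          + (\<Sum>k<N. dcoef lam (Suc k) / real (Suc k) ^ p / real (Suc (Suc k)))
          - dharm lam p N / (real N + 1) - dharm lam p N / (real N + 2))" for N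
  have "dharm lam p (n + 1) / (real (n + 1) * real (n + 3)) = Q (Suc n) - Q n" for n
  proof -
    define m where "m = real (Suc n)"
    define X where "X = dcoef lam (Suc n) / m ^ p"
    have m: "m > 0" "real (n + 1) = m" "real (n + 3) = m + 2" "real (Suc n) + 1 = m + 1" "real n + 1 = m"
      "real (Suc n) + 2 = m + 2" "real n + 2 = m + 1" "real (Suc (Suc n)) = m + 1"
      by (simp_all add: m_def)
    have H: "dharm lam p (n + 1) = dharm lam p n + X" by (simp add: dharm_Suc X_def m_def)
    have B: "dcoef lam (Suc n) / real (Suc n) ^ (p + 1) = X / m" by (simp add: X_def m_def)
    have E: "dcoef lam (Suc n) / real (Suc n) ^ p / real (Suc (Suc n)) = X / (m + 1)"
      by (simp add: X_def m_def)
    have Hs: "dharm lam p (Suc n) = dharm lam p n + X" using H by simp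
    have QD: "Q (Suc n) - Q n = (1/2) * (X / m + X / (m + 1) - (dharm lam p n + X) / (m + 1) - (dharm lam p n + X) / (m + 2) + dharm lam p n / m + dharm lam p n / (m + 1))"
      unfolding Q_def sum.lessThan_Suc B E Hs m(4-7) by (simp add: algebra_simps)
    show ?thesis unfolding H m(2,3) G2[OF m(1)] QD by (rule refl)
  qed
  then have "(\<Sum>k<N. dharm lam p (k + 1) / (real (k + 1) * real (k + 3))) = (\<Sum>k<N. Q (Suc k) - Q k)"
    by simp
  also have "\<dots> = Q N - Q 0" by (rule sum_lessThan_telescope)
  finally show ?thesis by (simp add: Q_def dharm_0)
qed

lemma pw: "(y::real) > 0 \<Longrightarrow> A / y ^ (p + 1) * y = A / y ^ p"
  by (simp add: field_simps)

theorem theorem5: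
  fixes lam :: real and p :: nat
  assumes "lam \<noteq> 0" and "p \<ge> 1"
  shows "(summable (dzeta_term lam (real p + 1)) \<longrightarrow>
           (\<lambda>k. dharm lam p (k + 1) / (real (k + 1) * real (k + 2)))
             sums dzeta lam (real p + 1))
       \<and> (summable (dzeta_term lam 2) \<longrightarrow>
           (\<lambda>k. dharm lam p (k + 1) / (real (k + 1) * real (k + 3)))
             sums ((1 / 2) * (dzeta lam (real p + 1)
                    + (\<Sum>k = 2..p. (-1) ^ k * dzeta lam (real p + 2 - real k))
                    + (-1) ^ (p + 1) / (lam + 1))))"
proof -
  note lam = assms(1)
  define b where "b n = dcoef lam (Suc n) / real (Suc n) ^ (p + 1)" for n
  have e1: "real p + 1 = real (p + 1)" by simp
  have dt: "dzeta_term lam (real p + 1) = b"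
    unfolding e1 b_def by (rule ext, rule dzeta_term_nat)
  have dz: "dzeta lam (real p + 1) = suminf b" unfolding dzeta_def dt ..
  have Hb: "dharm lam p N = (\<Sum>n<N. b n * real (Suc n))" for N
    unfolding dharm_eq b_def by (intro sum.cong refl pw[symmetric]) simp
  have K: "(\<lambda>N. dharm lam p N / (real N + d)) \<longlonglongrightarrow> 0"
    if "summable b" "d \<ge> 1" for d
  proof -
    have "summable (\<lambda>n. \<bar>b n\<bar>)" unfolding b_def
      by (rule abs_summ[OF lam]) (use that(1) in \<open>unfold b_def[abs_def]\<close>)
    from kron[OF this that(2)] show ?thesis unfolding Hb .
  qed
  have part1: "(\<lambda>k. dharm lam p (k + 1) / (real (k + 1) * real (k + 2))) sums dzeta lam (real p + 1)"
    if S1: "summable b"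
  proof -
    have "(\<lambda>N. (\<Sum>k<N. b k) - dharm lam p N / (real N + 1)) \<longlonglongrightarrow> suminf b - 0"
      by (intro tendsto_diff summable_LIMSEQ S1 K) auto
    then show ?thesis unfolding sums_def P1 dz b_def by simp
  qed
  have part2: "(\<lambda>k. dharm lam p (k + 1) / (real (k + 1) * real (k + 3)))
             sums ((1 / 2) * (dzeta lam (real p + 1)
                    + (\<Sum>k = 2..p. (-1) ^ k * dzeta lam (real p + 2 - real k))
                    + (-1) ^ (p + 1) / (lam + 1)))"
    if S2: "summable (dzeta_term lam 2)"
  proof -
    have S2': "summable (\<lambda>n. dcoef lam (Suc n) / real (Suc n) ^ 2)"
    proof -
      have e2: "(2::real) = real (2::nat)" by simp
      have "dzeta_term lam 2 = (\<lambda>n. dcoef lam (Suc n) / real (Suc n) ^ 2)"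
        by (unfold e2, rule ext, rule dzeta_term_nat)
      then show ?thesis using S2 by simp
    qed
    note AS2 = abs_summ[OF lam S2']
    have sm: "summable (\<lambda>n. dcoef lam (Suc n) / real (Suc n) ^ m)" if "m \<ge> 2" for m
    proof (rule summable_rabs_cancel, rule summable_comparison_test[OF _ AS2])
      show "\<exists>N. \<forall>n\<ge>N. norm \<bar>dcoef lam (Suc n) / real (Suc n) ^ m\<bar> \<le> \<bar>dcoef lam (Suc n) / real (Suc n) ^ 2\<bar>"
      proof (intro exI allI impI)
        fix n :: nat
        have "real (Suc n) ^ 2 \<le> real (Suc n) ^ m" using that by (intro power_increasing) auto
        then show "norm \<bar>dcoef lam (Suc n) / real (Suc n) ^ m\<bar> \<le> \<bar>dcoef lam (Suc n) / real (Suc n) ^ 2\<bar>"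
          unfolding real_norm_def abs_abs abs_divide by (intro divide_left_mono) auto
      qed
    qed
    have Sb: "summable b" unfolding b_def using sm[of "p + 1"] assms(2) by simp
    obtain nm1 tl where tl: "lam \<noteq> -1" "(\<lambda>n. dcoef lam (Suc n) / (real (Suc n) * real (Suc (Suc n)))) sums (1 / (lam + 1))"
      using tele[OF lam S2'] by blast
    define E where "E n = dcoef lam (Suc n) / real (Suc n) ^ p / real (Suc (Suc n))" for n
    have Eeq: "E n = (\<Sum>j=2..p. (-1) ^ j * (dcoef lam (Suc n) / real (Suc n) ^ (p + 2 - j)))
               + (-1) ^ (p + 1) * (dcoef lam (Suc n) / (real (Suc n) * real (Suc (Suc n))))" for n
    proof -
      define x where "x = real (Suc n)"
      have x: "x > 0" "real (Suc (Suc n)) = x + 1" by (simp_all add: x_def)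
      have "E n = dcoef lam (Suc n) * (1 / (x ^ p * (x + 1)))" unfolding E_def x(2) x_def[symmetric] by simp
      also have "\<dots> = dcoef lam (Suc n) * ((\<Sum>j=2..p. (-1) ^ j / x ^ (p + 2 - j)) + (-1) ^ (p + 1) / (x * (x + 1)))"
        by (simp only: PF[OF x(1) assms(2)])
      also have "\<dots> = (\<Sum>j=2..p. (-1) ^ j * (dcoef lam (Suc n) / x ^ (p + 2 - j)))
               + (-1) ^ (p + 1) * (dcoef lam (Suc n) / (x * (x + 1)))"
        by (simp add: distrib_left right_diff_distrib sum_distrib_left mult_ac)
      finally show ?thesis unfolding x(2) x_def .
    qed
    have zj: "(\<lambda>n. (-1) ^ j * (dcoef lam (Suc n) / real (Suc n) ^ (p + 2 - j))) sums ((-1) ^ j * dzeta lam (real p + 2 - real j))"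
      if "j \<in> {2..p}" for j
    proof -
      have r: "real p + 2 - real j = real (p + 2 - j)" using that by auto
      have "dzeta_term lam (real p + 2 - real j) = (\<lambda>n. dcoef lam (Suc n) / real (Suc n) ^ (p + 2 - j))"
        unfolding r by (simp add: fun_eq_iff dzeta_term_nat)
      moreover have "summable (\<lambda>n. dcoef lam (Suc n) / real (Suc n) ^ (p + 2 - j))"
        using that by (intro sm) auto
      ultimately show ?thesis unfolding dzeta_def by (metis sums_mult summable_sums)
    qed
    have Es: "E sums ((\<Sum>j=2..p. (-1) ^ j * dzeta lam (real p + 2 - real j)) + (-1) ^ (p + 1) * (1 / (lam + 1)))"
      unfolding Eeq[abs_def] by (intro sums_add sums_sum zj sums_mult tl(2))
    have "(\<lambda>N. (1/2) * ((\<Sum>k<N. b k) + (\<Sum>k<N. E k) - dharm lam p N / (real N + 1) - dharm lam p N / (real N + 2)))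
          \<longlonglongrightarrow> (1/2) * (suminf b + ((\<Sum>j=2..p. (-1) ^ j * dzeta lam (real p + 2 - real j)) + (-1) ^ (p + 1) * (1 / (lam + 1))) - 0 - 0)"
      using Es unfolding sums_def
      by (intro tendsto_intros summable_LIMSEQ Sb K) auto
    then show ?thesis unfolding sums_def P2 dz b_def E_def by (simp add: add_diff_eq)
  qed
  show ?thesis using part1 part2 dt by auto
qed

end
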